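(* Let $L$ be a finite-dimensional Lie algebra over a field $F$. If $L$ has a supersolvable maximal subalgebra $M$ with $\eta(L:M)=1$ and $N(L)\not\subseteq M$, then $L$ is supersolvable.
   Context: $N(L)$ denotes the nilradical of $L$ (its largest nilpotent ideal). A Lie algebra is supersolvable if it has a chain of ideals $0=L_0\subset L_1\subset\cdots\subset L_n$ equal to the whole algebra, with successive quotients one-dimensional. For a nonzero subalgebra $X$ of $L$, the strict core $k(X)$ is the sum of all ideals of $L$ that are proper subalgebras of $X$ (it is $0$ if there are none). For a maximal subalgebra $M$, a subalgebra $C$ is a completion of $M$ if $C\not\subseteq M$ but every proper subalgebra of $C$ that is an ideal of $L$ is contained in $M$; an ideal completion is a completion that is an ideal of $L$. The ideal index $\eta(L:M)$ is $\dim(C/k(C))$ for any ideal completion $C$ of $M$ (independent of the choice of $C$). *)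

theory Defs
  imports Complex_Main
begin

text \<open>A Lie algebra over a field: the whole type 'b, with scalar multiplication
  scale (from field 'a) and bracket br.  All notions below are relative to
  (scale, br).\<close>

definition lie_algebra ::
  "('a::field \<Rightarrow> 'b::ab_group_add \<Rightarrow> 'b) \<Rightarrow> ('b \<Rightarrow> 'b \<Rightarrow> 'b) \<Rightarrow> bool" where
  "lie_algebra scale br \<longleftrightarrow>
     vector_space scale \<and>
     (\<forall>x y z. br (x + y) z = br x z + br y z) \<and>
     (\<forall>x y z. br x (y + z) = br x y + br x z) \<and>
     (\<forall>c x y. br (scale c x) y = scale c (br x y)) \<and>
     (\<forall>c x y. br x (scale c y) = scale c (br x y)) \<and>
     (\<forall>x. br x x = 0) \<and>
     (\<forall>x y z. br x (br y z) + br y (br z x) + br z (br x y) = 0)"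

definition finite_dim ::
  "('a::field \<Rightarrow> 'b::ab_group_add \<Rightarrow> 'b) \<Rightarrow> bool" where
  "finite_dim scale \<longleftrightarrow> (\<exists>B. finite B \<and> module.span scale B = UNIV)"

definition lie_subalgebra ::
  "('a::field \<Rightarrow> 'b::ab_group_add \<Rightarrow> 'b) \<Rightarrow> ('b \<Rightarrow> 'b \<Rightarrow> 'b) \<Rightarrow> 'b set \<Rightarrow> bool" where
  "lie_subalgebra scale br S \<longleftrightarrow>
     module.subspace scale S \<and> (\<forall>x\<in>S. \<forall>y\<in>S. br x y \<in> S)"

definition lie_ideal_of ::
  "('a::field \<Rightarrow> 'b::ab_group_add \<Rightarrow> 'b) \<Rightarrow> ('b \<Rightarrow> 'b \<Rightarrow> 'b) \<Rightarrow> 'b set \<Rightarrow> 'b set \<Rightarrow> bool" where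
  "lie_ideal_of scale br A I \<longleftrightarrow>
     module.subspace scale I \<and> I \<subseteq> A \<and> (\<forall>x\<in>A. \<forall>y\<in>I. br x y \<in> I)"

abbreviation lie_ideal where
  "lie_ideal scale br I \<equiv> lie_ideal_of scale br UNIV I"

definition maximal_subalgebra ::
  "('a::field \<Rightarrow> 'b::ab_group_add \<Rightarrow> 'b) \<Rightarrow> ('b \<Rightarrow> 'b \<Rightarrow> 'b) \<Rightarrow> 'b set \<Rightarrow> bool" where
  "maximal_subalgebra scale br M \<longleftrightarrow>
     lie_subalgebra scale br M \<and> M \<noteq> UNIV \<and>
     (\<forall>S. lie_subalgebra scale br S \<and> M \<subseteq> S \<longrightarrow> S = M \<or> S = UNIV)"

fun lower_central ::
  "('a::field \<Rightarrow> 'b::ab_group_add \<Rightarrow> 'b) \<Rightarrow> ('b \<Rightarrow> 'b \<Rightarrow> 'b) \<Rightarrow> 'b set \<Rightarrow> nat \<Rightarrow> 'b set" where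
  "lower_central scale br A 0 = A"
| "lower_central scale br A (Suc k) =
     module.span scale {br x y | x y. x \<in> A \<and> y \<in> lower_central scale br A k}"

definition lie_nilpotent ::
  "('a::field \<Rightarrow> 'b::ab_group_add \<Rightarrow> 'b) \<Rightarrow> ('b \<Rightarrow> 'b \<Rightarrow> 'b) \<Rightarrow> 'b set \<Rightarrow> bool" where
  "lie_nilpotent scale br A \<longleftrightarrow> (\<exists>k. lower_central scale br A k = {0})"

text \<open>Nilradical: the sum of all nilpotent ideals (in finite dimension this is the
  largest nilpotent ideal).\<close>
definition nilradical ::
  "('a::field \<Rightarrow> 'b::ab_group_add \<Rightarrow> 'b) \<Rightarrow> ('b \<Rightarrow> 'b \<Rightarrow> 'b) \<Rightarrow> 'b set" where
  "nilradical scale br =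
     module.span scale (\<Union>{I. lie_ideal scale br I \<and> lie_nilpotent scale br I})"

definition supersolvable ::
  "('a::field \<Rightarrow> 'b::ab_group_add \<Rightarrow> 'b) \<Rightarrow> ('b \<Rightarrow> 'b \<Rightarrow> 'b) \<Rightarrow> 'b set \<Rightarrow> bool" where
  "supersolvable scale br A \<longleftrightarrow>
     (\<exists>n C. C 0 = {0} \<and> C n = A \<and>
        (\<forall>i\<le>n. lie_ideal_of scale br A (C i)) \<and>
        (\<forall>i<n. C i \<subseteq> C (Suc i) \<and>
               vector_space.dim scale (C (Suc i)) = vector_space.dim scale (C i) + 1))"

definition strict_core ::
  "('a::field \<Rightarrow> 'b::ab_group_add \<Rightarrow> 'b) \<Rightarrow> ('b \<Rightarrow> 'b \<Rightarrow> 'b) \<Rightarrow> 'b set \<Rightarrow> 'b set" where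
  "strict_core scale br X =
     module.span scale (\<Union>{I. lie_ideal scale br I \<and> I \<subset> X})"

definition completion ::
  "('a::field \<Rightarrow> 'b::ab_group_add \<Rightarrow> 'b) \<Rightarrow> ('b \<Rightarrow> 'b \<Rightarrow> 'b) \<Rightarrow> 'b set \<Rightarrow> 'b set \<Rightarrow> bool" where
  "completion scale br M C \<longleftrightarrow>
     lie_subalgebra scale br C \<and> \<not> C \<subseteq> M \<and>
     (\<forall>I. lie_ideal scale br I \<and> I \<subset> C \<longrightarrow> I \<subseteq> M)"

definition ideal_completion ::
  "('a::field \<Rightarrow> 'b::ab_group_add \<Rightarrow> 'b) \<Rightarrow> ('b \<Rightarrow> 'b \<Rightarrow> 'b) \<Rightarrow> 'b set \<Rightarrow> 'b set \<Rightarrow> bool" where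
  "ideal_completion scale br M C \<longleftrightarrow>
     completion scale br M C \<and> lie_ideal scale br C"

text \<open>Ideal index eta(L:M) = dim(C / k(C)) = dim C - dim k(C) for an ideal completion C
  (k(C) \<subseteq> C); the choice of C is irrelevant by the paper.\<close>
definition ideal_index ::
  "('a::field \<Rightarrow> 'b::ab_group_add \<Rightarrow> 'b) \<Rightarrow> ('b \<Rightarrow> 'b \<Rightarrow> 'b) \<Rightarrow> 'b set \<Rightarrow> nat" where
  "ideal_index scale br M =
     (SOME n. \<exists>C. ideal_completion scale br M C \<and>
        n = vector_space.dim scale C - vector_space.dim scale (strict_core scale br C))"

end

theory Submission imports Defs begin

locale lie_fd = vector_space scale for scale :: "'a::field \<Rightarrow> 'b::ab_group_add \<Rightarrow> 'b" +
  fixes br :: "'b \<Rightarrow> 'b \<Rightarrow> 'b"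
  assumes addL: "br (x + y) z = br x z + br y z"
    and addR: "br x (y + z) = br x y + br x z"
    and scL: "br (scale c x) y = scale c (br x y)"
    and scR: "br x (scale c y) = scale c (br x y)"
    and alt: "br x x = 0"
    and jac: "br x (br y z) + br y (br z x) + br z (br x y) = 0"
    and fin: "\<exists>B. finite B \<and> span B = UNIV"
begin

definition fdB where "fdB = (SOME B. finite B \<and> independent B \<and> span B = UNIV)"

lemma fdB: "finite fdB \<and> independent fdB \<and> span fdB = UNIV"
proof -
  obtain B where B: "finite B" "span B = UNIV" using fin by blast
  obtain B' where "B' \<subseteq> B" "independent B'" "B \<subseteq> span B'"
    using maximal_independent_subset by blast
  then have "finite B' \<and> independent B' \<and> span B' = UNIV"
    using B by (metis finite_subset span_mono span_span top.extremum_uniqueI)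
  then show ?thesis unfolding fdB_def by (rule someI)
qed

sublocale fd: finite_dimensional_vector_space scale fdB
  using fdB by unfold_locales auto

lemma br0L[simp]: "br 0 x = 0" by (metis add_cancel_right_right addL)
lemma br0R[simp]: "br x 0 = 0" by (metis add_cancel_right_right addR)
lemma anti: "br x y = - br y x"
proof -
  have "br x x + br y x + (br x y + br y y) = 0" using alt[of "x+y"] by (simp only: addL addR)
  then have "br x y + br y x = 0" by (simp add: alt add.commute)
  then show ?thesis by (simp add: eq_neg_iff_add_eq_0)
qed
lemma negR: "br x (- y) = - br x y" by (metis add_eq_0_iff addR br0R)
lemma negL: "br (- x) y = - br x y" by (metis add_eq_0_iff addL br0L)

lemma span_brR:
  assumes "x \<in> span S" "subspace T" "\<And>s. s \<in> S \<Longrightarrow> br l s \<in> T"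
  shows "br l x \<in> T"
proof -
  have "subspace {x. br l x \<in> T}"
    unfolding subspace_def using assms(2)
    by (auto simp: addR scR subspace_0 subspace_add subspace_scale)
  then show ?thesis using assms(1,3) span_subspace_induct by blast
qed

lemma span_brL:
  assumes "x \<in> span S" "subspace T" "\<And>s. s \<in> S \<Longrightarrow> br s l \<in> T"
  shows "br x l \<in> T"
proof -
  have "subspace {x. br x l \<in> T}"
    unfolding subspace_def using assms(2)
    by (auto simp: addL scL subspace_0 subspace_add subspace_scale)
  then show ?thesis using assms(1,3) span_subspace_induct by blast
qed

lemma span_br2:
  assumes "x \<in> span S" "y \<in> span S'" "subspace T" "\<And>s s'. s \<in> S \<Longrightarrow> s' \<in> S' \<Longrightarrow> br s s' \<in> T"
  shows "br x y \<in> T"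
  using assms by (metis span_brL span_brR)

abbreviation "ideal I \<equiv> lie_ideal_of scale br UNIV I"

lemma ideal_iff: "ideal I \<longleftrightarrow> subspace I \<and> (\<forall>x y. y \<in> I \<longrightarrow> br x y \<in> I)"
  unfolding lie_ideal_of_def by auto

lemma idealR: "ideal I \<Longrightarrow> y \<in> I \<Longrightarrow> br x y \<in> I" by (simp add: ideal_iff)
lemma idealL: "ideal I \<Longrightarrow> y \<in> I \<Longrightarrow> br y x \<in> I"
  by (metis anti ideal_iff subspace_neg)

definition chainP where
  "chainP A \<longleftrightarrow> (\<exists>n C. C 0 = {0} \<and> C n = A \<and>
        (\<forall>i\<le>n. ideal (C i)) \<and>
        (\<forall>i<n. C i \<subseteq> C (Suc i) \<and> dim (C (Suc i)) = dim (C i) + 1))"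

lemma chainP_0: "chainP {0}"
  unfolding chainP_def
  by (rule exI[of _ 0], rule exI[of _ "\<lambda>_. {0}"]) (auto simp: ideal_iff)

lemma chainP_ext:
  assumes "chainP A" "ideal A'" "A \<subseteq> A'" "dim A' \<le> dim A + 1"
  shows "chainP A'"
proof (cases "dim A' \<le> dim A")
  case True
  have "subspace A" using assms(1) unfolding chainP_def by (auto simp: ideal_iff)
  then have "A = A'" using fd.subspace_dim_equal assms True by (auto simp: ideal_iff)
  then show ?thesis using assms by simp
next
  case False
  then have d: "dim A' = dim A + 1" using assms by simp
  obtain n C where C: "C 0 = {0}" "C n = A" "\<forall>i\<le>n. ideal (C i)"
     "\<forall>i<n. C i \<subseteq> C (Suc i) \<and> dim (C (Suc i)) = dim (C i) + 1"
    using assms(1) unfolding chainP_def by blast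
  define C' where "C' = C(Suc n := A')"
  have "C' 0 = {0} \<and> C' (Suc n) = A' \<and> (\<forall>i\<le>Suc n. ideal (C' i)) \<and>
        (\<forall>i<Suc n. C' i \<subseteq> C' (Suc i) \<and> dim (C' (Suc i)) = dim (C' i) + 1)"
    using C assms d unfolding C'_def
    by (auto simp: le_Suc_eq less_Suc_eq)
  then show ?thesis unfolding chainP_def by blast
qed

lemma dim_ins_le: "X \<subseteq> span (insert w Y) \<Longrightarrow> dim X \<le> dim Y + 1"
  by (metis (no_types, lifting) Suc_eq_plus1 fd.dim_insert fd.dim_mono le_Suc_eq)

lemma step_eq:
  assumes "subspace U" "subspace U'" "U \<subseteq> U'" "dim U' = dim U + 1" "w \<in> U'" "w \<notin> U"
  shows "U' = span (insert w U)"
proof -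
  have s: "span (insert w U) \<subseteq> U'" using assms by (intro span_minimal) auto
  have "dim (span (insert w U)) = dim U + 1"
    using assms fd.dim_insert by (simp add: span_eq_iff[THEN iffD2])
  then show ?thesis using fd.subspace_dim_equal[OF subspace_span assms(2) s] assms(4) by simp
qed


lemma decomp:
  assumes "span (J \<union> M) = UNIV" "subspace J" "subspace M"
  obtains a b where "a \<in> J" "b \<in> M" "l = a + b"
proof -
  have "l \<in> span (J \<union> M)" using assms by simp
  then show ?thesis using that assms unfolding span_Un by (auto simp: span_eq_iff[THEN iffD2])
qed

lemma span_full:
  assumes "maximal_subalgebra scale br M" "ideal J" "\<not> J \<subseteq> M"
  shows "span (J \<union> M) = UNIV"
proof -
  have M: "subspace M" "\<And>x y. x \<in> M \<Longrightarrow> y \<in> M \<Longrightarrow> br x y \<in> M"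
    using assms(1) unfolding maximal_subalgebra_def lie_subalgebra_def by auto
  let ?S = "span (J \<union> M)"
  have "lie_subalgebra scale br ?S"
    unfolding lie_subalgebra_def
  proof (intro conjI ballI subspace_span)
    fix x y assume "x \<in> ?S" "y \<in> ?S"
    then show "br x y \<in> ?S"
    proof (rule span_br2)
      fix s s' assume "s \<in> J \<union> M" "s' \<in> J \<union> M"
      then have "br s s' \<in> J \<union> M" using M assms(2) idealL idealR by blast
      then show "br s s' \<in> ?S" by (rule span_base)
    qed simp
  qed
  moreover have "M \<subseteq> ?S" "?S \<noteq> M" using assms(3) span_superset by blast+
  ultimately show ?thesis using assms(1) unfolding maximal_subalgebra_def by blast
qed

lemma lower:
  assumes Mmax: "maximal_subalgebra scale br M"
    and I: "ideal I" "lie_nilpotent scale br I" "\<not> I \<subseteq> M"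
    and E: "E 0 = {0}" "E n = M" "\<forall>i\<le>n. lie_ideal_of scale br M (E i)"
       "\<forall>i<n. E i \<subseteq> E (Suc i) \<and> dim (E (Suc i)) = dim (E i) + 1"
  shows "ideal A \<Longrightarrow> A \<subseteq> M \<Longrightarrow> chainP A"
proof (induction "dim A" arbitrary: A rule: less_induct)
  case less
  have M: "subspace M" "\<And>x y. x \<in> M \<Longrightarrow> y \<in> M \<Longrightarrow> br x y \<in> M"
    using Mmax unfolding maximal_subalgebra_def lie_subalgebra_def by auto
  have IM: "span (I \<union> M) = UNIV" using span_full Mmax I by blast
  have sI: "subspace I" using I ideal_iff by blast
  have sA: "subspace A" using less ideal_iff by blast
  show ?case
  proof (cases "A = {0}")
    case True then show ?thesis using chainP_0 by simp
  next
    case False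
    let ?P = "\<lambda>B. ideal B \<and> B \<subset> A"
    have P0: "?P {0}" using False subspace_0[OF sA] by (auto simp: ideal_iff)
    obtain B where B: "?P B" "\<And>T. ?P T \<Longrightarrow> dim T \<le> dim B"
    proof -
      have "\<forall>y. ?P y \<longrightarrow> dim y < dim A + 1"
        using fd.dim_subset by (metis psubset_imp_subset less_Suc_eq_le Suc_eq_plus1)
      then show ?thesis using ex_has_greatest_nat[of ?P "{0}" dim "dim A + 1", OF P0] that by blast
    qed
    have sB: "subspace B" using B ideal_iff by blast
    have dBA: "dim B < dim A"
      using B(1) sA sB fd.dim_psubset by (metis span_eq_iff)
    have chB: "chainP B" using less(1)[OF dBA] B(1) less(3) by auto
    have maxB: "T = B \<or> T = A" if "ideal T" "B \<subseteq> T" "T \<subseteq> A" for T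
    proof (cases "T = A")
      case False
      then have "dim T \<le> dim B" using B(2) that by blast
      then show ?thesis using fd.subspace_dim_equal[of B T] sB that ideal_iff by blast
    qed simp
    define BR where "BR = {br i a | i a. i \<in> I \<and> a \<in> A}"
    have IAB: "BR \<subseteq> B"
    proof -
      let ?T = "span (B \<union> BR)"
      have Tid: "ideal ?T" unfolding ideal_iff
      proof (intro conjI allI impI subspace_span)
        fix l y assume "y \<in> ?T"
        then show "br l y \<in> ?T"
        proof (rule span_brR)
          fix s assume "s \<in> B \<union> BR"
          then show "br l s \<in> ?T"
          proof
            assume "s \<in> B" then show ?thesis using B(1) idealR span_base by blast
          next
            assume "s \<in> BR"
            then obtain i a where ia: "i \<in> I" "a \<in> A" "s = br i a" unfolding BR_def by blast
            have j: "br l (br i a) = - br i (br a l) - br a (br l i)"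
              using jac[of l i a] by (simp add: eq_neg_iff_add_eq_0 algebra_simps)
            have "br i (br a l) \<in> BR" unfolding BR_def using ia idealL less(2) by blast
            moreover have "br a (br l i) = - br (br l i) a" by (rule anti)
            moreover have "br (br l i) a \<in> BR" unfolding BR_def using ia idealR I(1) by blast
            ultimately show ?thesis using j ia
              by (simp add: span_base span_diff span_neg)
          qed
        qed simp
      qed
      have "?T \<subseteq> A"
        using B(1) less(2) unfolding BR_def
        by (intro span_minimal[OF _ sA]) (auto intro: idealR)
      then have "?T = B \<or> ?T = A" using maxB Tid span_superset by blast
      moreover have "?T \<noteq> A"
      proof
        assume TA: "?T = A"
        have "A \<subseteq> span (lower_central scale br I k \<union> B)" for k
        proof (induction k)
          case 0
          have "?T \<subseteq> span (I \<union> B)"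
            unfolding BR_def using I(1) by (intro span_mono) (auto intro: idealL)
          then show ?case using TA by simp
        next
          case (Suc k)
          have "B \<union> BR \<subseteq> span (lower_central scale br I (Suc k) \<union> B)"
          proof
            fix s assume "s \<in> B \<union> BR"
            then show "s \<in> span (lower_central scale br I (Suc k) \<union> B)"
            proof
              assume "s \<in> B" then show ?thesis by (simp add: span_base)
            next
              assume "s \<in> BR"
              then obtain i a where ia: "i \<in> I" "a \<in> A" "s = br i a" unfolding BR_def by blast
              have "a \<in> span (lower_central scale br I k \<union> B)" using Suc ia by blast
              then show ?thesis unfolding ia(3)
              proof (rule span_brR)
                fix y assume "y \<in> lower_central scale br I k \<union> B"
                then show "br i y \<in> span (lower_central scale br I (Suc k) \<union> B)"
                proof
                  assume "y \<in> lower_central scale br I k"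
                  then have "br i y \<in> lower_central scale br I (Suc k)"
                    using ia by (auto intro: span_base)
                  then show ?thesis by (simp add: span_base)
                next
                  assume "y \<in> B" then show ?thesis using B(1) idealR span_base by blast
                qed
              qed simp
            qed
          qed
          then have "?T \<subseteq> span (lower_central scale br I (Suc k) \<union> B)"
            by (intro span_minimal) auto
          then show ?case using TA by simp
        qed
        moreover obtain k where "lower_central scale br I k = {0}"
          using I(2) unfolding lie_nilpotent_def by blast
        ultimately have "A \<subseteq> span ({0} \<union> B)" by metis
        then have "A \<subseteq> B" using sB by (simp add: span_eq_iff[THEN iffD2])
        then show False using B(1) by blast
      qed
      ultimately have "?T = B" by blast
      then show ?thesis using span_superset by blast
    qed
    define S where "S j = span ((E j \<inter> A) \<union> B)" for j
    have Sid: "S j = B \<or> S j = A" if "j \<le> n" for j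
    proof -
      have Ej: "subspace (E j)" "E j \<subseteq> M" "\<And>x y. x \<in> M \<Longrightarrow> y \<in> E j \<Longrightarrow> br x y \<in> E j"
        using E(3) that unfolding lie_ideal_of_def by auto
      have "ideal (S j)" unfolding ideal_iff
      proof (intro conjI allI impI)
        show "subspace (S j)" unfolding S_def by simp
        fix l y assume "y \<in> S j"
        obtain a b where ab: "a \<in> I" "b \<in> M" "l = a + b" using decomp[OF IM sI M(1)] by blast
        from \<open>y \<in> S j\<close> show "br l y \<in> S j" unfolding S_def
        proof (rule span_brR)
          fix s assume "s \<in> E j \<inter> A \<union> B"
          then show "br l s \<in> span (E j \<inter> A \<union> B)"
          proof
            assume s: "s \<in> E j \<inter> A"
            have "br a s \<in> B" using IAB ab s unfolding BR_def by blast
            moreover have "br b s \<in> E j \<inter> A" using Ej(3) ab s idealR less(2) by blast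
            ultimately show ?thesis unfolding ab(3) addL
              by (intro span_add) (auto intro: span_base)
          next
            assume "s \<in> B" then show ?thesis using B(1) idealR span_base by blast
          qed
        qed simp
      qed
      moreover have "B \<subseteq> S j" unfolding S_def using span_superset by blast
      moreover have "S j \<subseteq> A" unfolding S_def using B(1) sA by (intro span_minimal) auto
      ultimately show ?thesis using maxB by blast
    qed
    have S0: "S 0 = B" unfolding S_def E(1) using sB
      by (cases "0 \<in> A") (auto simp: span_eq_iff[THEN iffD2] insert_absorb subspace_0)
    have Sn: "S n = A" unfolding S_def E(2) using less(3) B(1) sA
      by (simp add: Int_absorb1 Un_absorb2 span_eq_iff[THEN iffD2] psubset_imp_subset)
    have "\<exists>j. j < n \<and> S j = B \<and> S (Suc j) = A"
    proof (rule ccontr)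
      assume nj: "\<nexists>j. j < n \<and> S j = B \<and> S (Suc j) = A"
      have "j \<le> n \<Longrightarrow> S j = B" for j
      proof (induction j)
        case (Suc j)
        have le: "Suc j \<le> n" using Suc.prems by simp
        then have "S j = B" "j < n" using Suc by auto
        then have "S (Suc j) \<noteq> A" using nj by blast
        then show ?case using Sid[OF le] by blast
      qed (simp add: S0)
      then show False using Sn B(1) by auto
    qed
    then obtain j where j: "j < n" "S j = B" "S (Suc j) = A" by blast
    have EjA: "subspace (E j)" "subspace (E (Suc j))" "E j \<subseteq> E (Suc j)"
      "dim (E (Suc j)) = dim (E j) + 1"
      using E(3,4) j(1) unfolding lie_ideal_of_def by auto
    have "\<exists>w. w \<in> E (Suc j) \<inter> A \<and> w \<notin> E j"
    proof (rule ccontr)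
      assume "\<nexists>w. w \<in> E (Suc j) \<inter> A \<and> w \<notin> E j"
      then have "E (Suc j) \<inter> A \<subseteq> E j \<inter> A" by blast
      then have "S (Suc j) \<subseteq> S j" unfolding S_def by (intro span_mono) blast
      then show False using j B(1) by auto
    qed
    then obtain w where w: "w \<in> E (Suc j) \<inter> A" "w \<notin> E j" by blast
    have Es: "E (Suc j) = span (insert w (E j))" using step_eq EjA w by blast
    have "E (Suc j) \<inter> A \<subseteq> span (insert w (E j \<inter> A))"
    proof
      fix x assume x: "x \<in> E (Suc j) \<inter> A"
      then obtain k where k: "x - scale k w \<in> span (E j)"
        using Es span_breakdown_eq by blast
      have "x - scale k w \<in> A" using x w sA by (auto intro: subspace_diff subspace_scale)
      then have "x - scale k w \<in> E j \<inter> A" using k EjA by (simp add: span_eq_iff[THEN iffD2])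
      then have "x - scale k w \<in> span (E j \<inter> A)" by (rule span_base)
      then show "x \<in> span (insert w (E j \<inter> A))" using span_breakdown_eq by blast
    qed
    then have "S (Suc j) \<subseteq> span (insert w (E j \<inter> A \<union> B))"
      unfolding S_def
      by (intro span_minimal) (auto intro: span_mono[THEN subsetD, rotated] span_base)
    then have "dim A \<le> dim B + 1" using dim_ins_le j
      by (metis S_def dim_span)
    then show ?thesis using chainP_ext[OF chB less(2)] B(1) by blast
  qed
qed


lemma main:
  assumes Mmax: "maximal_subalgebra scale br M"
    and Mss: "supersolvable scale br M"
    and eta: "ideal_index scale br M = 1"
    and nil: "\<not> nilradical scale br \<subseteq> M"
  shows "supersolvable scale br UNIV"
proof -
  have M: "subspace M" "\<And>x y. x \<in> M \<Longrightarrow> y \<in> M \<Longrightarrow> br x y \<in> M" "M \<noteq> UNIV"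
    using Mmax unfolding maximal_subalgebra_def lie_subalgebra_def by auto
  obtain I where I: "ideal I" "lie_nilpotent scale br I" "\<not> I \<subseteq> M"
  proof -
    have "\<exists>I. ideal I \<and> lie_nilpotent scale br I \<and> \<not> I \<subseteq> M"
    proof (rule ccontr)
      assume "\<not> ?thesis"
      then have "\<Union>{I. ideal I \<and> lie_nilpotent scale br I} \<subseteq> M" by blast
      then have "nilradical scale br \<subseteq> M" unfolding nilradical_def
        using span_minimal M(1) by blast
      then show False using nil by blast
    qed
    then show ?thesis using that by blast
  qed
  obtain n E where E: "E 0 = {0}" "E n = M" "\<forall>i\<le>n. lie_ideal_of scale br M (E i)"
       "\<forall>i<n. E i \<subseteq> E (Suc i) \<and> dim (E (Suc i)) = dim (E i) + 1"
    using Mss unfolding supersolvable_def by blast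
  let ?Q = "\<lambda>C. ideal C \<and> \<not> C \<subseteq> M"
  have Q: "?Q UNIV" using M(3) by (auto simp: ideal_iff)
  obtain C0 where C0: "?Q C0" "\<And>D. ?Q D \<Longrightarrow> dim C0 \<le> dim D"
    using ex_has_least_nat[of ?Q UNIV dim, OF Q] by blast
  have "ideal_completion scale br M C0"
    unfolding ideal_completion_def completion_def lie_subalgebra_def
  proof (intro conjI allI impI ballI)
    show "subspace C0" using C0 ideal_iff by blast
    show "br x y \<in> C0" if "x \<in> C0" "y \<in> C0" for x y using C0(1) that idealR by blast
    show "\<not> C0 \<subseteq> M" using C0 by blast
    show "ideal C0" using C0 by blast
    fix J assume J: "ideal J \<and> J \<subset> C0"
    show "J \<subseteq> M"
    proof (rule ccontr)
      assume "\<not> J \<subseteq> M"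
      then have "dim C0 \<le> dim J" using C0(2) J by blast
      moreover have "dim J < dim C0" using J fd.dim_psubset C0(1)
        by (metis span_eq_iff ideal_iff)
      ultimately show False by simp
    qed
  qed
  then have "\<exists>k. \<exists>C. ideal_completion scale br M C \<and>
        k = dim C - dim (strict_core scale br C)" by blast
  from someI_ex[OF this] eta obtain C where C: "ideal_completion scale br M C"
      "1 = dim C - dim (strict_core scale br C)"
    unfolding ideal_index_def by auto
  define K where "K = strict_core scale br C"
  have Cid: "ideal C" "\<not> C \<subseteq> M" "\<And>J. ideal J \<Longrightarrow> J \<subset> C \<Longrightarrow> J \<subseteq> M"
    using C(1) unfolding ideal_completion_def completion_def by auto
  have sC: "subspace C" using Cid ideal_iff by blast
  have KC: "K \<subseteq> C" unfolding K_def strict_core_def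
    using sC by (intro span_minimal) auto
  have KM: "K \<subseteq> M" unfolding K_def strict_core_def
    using M(1) Cid(3) by (intro span_minimal) auto
  have Kid: "ideal K" unfolding ideal_iff
  proof (intro conjI allI impI)
    show "subspace K" unfolding K_def strict_core_def by simp
    fix x y assume "y \<in> K"
    then show "br x y \<in> K" unfolding K_def strict_core_def
    proof (rule span_brR)
      fix s assume "s \<in> \<Union>{I. ideal I \<and> I \<subset> C}"
      then obtain J where "ideal J" "J \<subset> C" "s \<in> J" by blast
      then show "br x s \<in> span (\<Union>{I. ideal I \<and> I \<subset> C})"
        by (intro span_base) (auto intro: idealR)
    qed simp
  qed
  have dC: "dim C = dim K + 1" using C(2) KC fd.dim_subset unfolding K_def[symmetric] by fastforce
  have "chainP K" using lower[OF Mmax I E] Kid KM by blast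
  then have chC: "chainP C" using chainP_ext[OF _ Cid(1) KC] dC by simp
  have CM: "span (C \<union> M) = UNIV" using span_full Mmax Cid by blast
  have top: "j \<le> n \<Longrightarrow> chainP (span (C \<union> E j))" for j
  proof (induction j)
    case 0
    have "C \<union> E 0 = C" using E(1) subspace_0[OF sC] by auto
    then show ?case using chC sC by (simp add: span_eq_iff[THEN iffD2])
  next
    case (Suc j)
    then have IH: "chainP (span (C \<union> E j))" by simp
    have Ej: "subspace (E j)" "subspace (E (Suc j))" "E j \<subseteq> E (Suc j)"
      "dim (E (Suc j)) = dim (E j) + 1" "E (Suc j) \<subseteq> M"
      "\<And>x y. x \<in> M \<Longrightarrow> y \<in> E (Suc j) \<Longrightarrow> br x y \<in> E (Suc j)"
      using E(3,4) Suc.prems unfolding lie_ideal_of_def by auto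
    have "E j \<noteq> E (Suc j)" using Ej(4) by auto
    then obtain w where w: "w \<in> E (Suc j)" "w \<notin> E j" using Ej(3) by blast
    have Es: "E (Suc j) = span (insert w (E j))" using step_eq Ej w by blast
    have id: "ideal (span (C \<union> E (Suc j)))" unfolding ideal_iff
    proof (intro conjI allI impI subspace_span)
      fix l y assume "y \<in> span (C \<union> E (Suc j))"
      obtain a b where ab: "a \<in> C" "b \<in> M" "l = a + b" using decomp[OF CM sC M(1)] by blast
      from \<open>y \<in> span (C \<union> E (Suc j))\<close> show "br l y \<in> span (C \<union> E (Suc j))"
      proof (rule span_brR)
        fix s assume "s \<in> C \<union> E (Suc j)"
        then show "br l s \<in> span (C \<union> E (Suc j))"
        proof
          assume "s \<in> C" then show ?thesis using Cid(1) idealR span_base by blast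
        next
          assume s: "s \<in> E (Suc j)"
          have "br a s \<in> C" using ab Cid(1) idealL by blast
          moreover have "br b s \<in> E (Suc j)" using Ej(6) ab s by blast
          ultimately show ?thesis unfolding ab(3) addL
            by (intro span_add) (auto intro: span_base)
        qed
      qed simp
    qed
    have sub: "span (C \<union> E j) \<subseteq> span (C \<union> E (Suc j))"
      using Ej(3) by (intro span_mono) blast
    have "span (C \<union> E (Suc j)) \<subseteq> span (insert w (C \<union> E j))"
      using Es by (intro span_minimal) (auto intro: span_base span_mono[THEN subsetD, rotated])
    then have "dim (span (C \<union> E (Suc j))) \<le> dim (span (C \<union> E j)) + 1"
      using dim_ins_le by (metis dim_span)
    then show ?case using chainP_ext[OF IH id sub] by blast
  qed
  have "chainP UNIV" using top[of n] E(2) CM by simp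
  then show ?thesis unfolding supersolvable_def chainP_def lie_ideal_of_def by simp
qed

end

theorem theorem2p9:
  fixes scale :: "'a::field \<Rightarrow> 'b::ab_group_add \<Rightarrow> 'b"
    and br :: "'b \<Rightarrow> 'b \<Rightarrow> 'b"
    and M :: "'b set"
  assumes "lie_algebra scale br"
    and "finite_dim scale"
    and "maximal_subalgebra scale br M"
    and "supersolvable scale br M"
    and "ideal_index scale br M = 1"
    and "\<not> nilradical scale br \<subseteq> M"
  shows "supersolvable scale br UNIV"
proof -
  interpret lie_fd scale br
    using assms(1,2) unfolding lie_algebra_def finite_dim_def lie_fd_def lie_fd_axioms_def
    by auto
  show ?thesis using main assms(3-6) by blast
qed

end
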